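(* Let $H$ be any graph obtained from $E_{20}$ by splitting a vertex. Then $H$ contains $K_{3,4}$ or $F_4$ as a minor.
   Context: $E_{20}$ is the graph with vertex set $\{e^0,e^1_1,e^1_2,e^1_3,e^2,e^3_1,e^3_2,e^3_3,e^4\}$ and the 16 edges $e^0e^2$; $e^0e^1_i$ ($i=1,2,3$); $e^1_1e^1_2$, $e^1_2e^1_3$, $e^1_3e^1_1$; and, for $i=1,2,3$, $e^1_ie^3_i$, $e^2e^3_i$, $e^4e^3_i$. $F_4$ is the graph with vertex set $\{f^1,f^2\}\cup\{f^i_j: i\in\{1,2\}, j\in\{1,2,3,4\}\}$ and the 16 edges: for each $i\in\{1,2\}$, $f^if^i_1$, $f^if^i_2$, $f^if^i_4$, $f^i_3f^i_1$, $f^i_3f^i_2$, $f^i_3f^i_4$; and $f^1_jf^2_{5-j}$ for $j=1,2,3,4$. Splitting a vertex $v$ of a graph $H$ means: delete $v$, add two new adjacent vertices $v_1,v_2$, and join each neighbour of $v$ to exactly one of $v_1,v_2$, so that each of $v_1,v_2$ is joined to at least two neighbours of $v$. *)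

theory Defs
  imports Main
begin

type_synonym 'a sgraph = "'a set \<times> 'a set set"

definition verts :: "'a sgraph \<Rightarrow> 'a set" where "verts G = fst G"
definition edges :: "'a sgraph \<Rightarrow> 'a set set" where "edges G = snd G"

definition simple_graph :: "'a sgraph \<Rightarrow> bool" where
  "simple_graph G \<longleftrightarrow> finite (verts G) \<and>
     (\<forall>e\<in>edges G. \<exists>u v. u \<noteq> v \<and> e = {u, v} \<and> u \<in> verts G \<and> v \<in> verts G)"

definition nbrs :: "'a sgraph \<Rightarrow> 'a \<Rightarrow> 'a set" where
  "nbrs G v = {u \<in> verts G. {u, v} \<in> edges G}"

definition connected_set :: "'a sgraph \<Rightarrow> 'a set \<Rightarrow> bool" where
  "connected_set G S \<longleftrightarrow> S \<noteq> {} \<and> S \<subseteq> verts G \<and>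
     (\<forall>u\<in>S. \<forall>v\<in>S. (u, v) \<in> {(x, y). x \<in> S \<and> y \<in> S \<and> {x, y} \<in> edges G}\<^sup>*)"

definition is_minor :: "'b sgraph \<Rightarrow> 'a sgraph \<Rightarrow> bool" where
  "is_minor M G \<longleftrightarrow> (\<exists>\<phi> :: 'b \<Rightarrow> 'a set.
     (\<forall>x\<in>verts M. connected_set G (\<phi> x)) \<and>
     (\<forall>x\<in>verts M. \<forall>y\<in>verts M. x \<noteq> y \<longrightarrow> \<phi> x \<inter> \<phi> y = {}) \<and>
     (\<forall>x\<in>verts M. \<forall>y\<in>verts M. {x, y} \<in> edges M \<longrightarrow>
         (\<exists>u\<in>\<phi> x. \<exists>w\<in>\<phi> y. {u, w} \<in> edges G)))"

text \<open>Splitting vertex v of G: the old vertices are Inl x (x \<noteq> v), the two new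
  adjacent vertices are Inr False (= v_1) and Inr True (= v_2); the neighbours of v
  in A are joined to v_1, the remaining neighbours of v to v_2.\<close>
definition split_vertex :: "'a sgraph \<Rightarrow> 'a \<Rightarrow> 'a set \<Rightarrow> ('a + bool) sgraph" where
  "split_vertex G v A =
     (Inl ` (verts G - {v}) \<union> {Inr False, Inr True},
      {{Inl x, Inl y} | x y. {x, y} \<in> edges G \<and> x \<noteq> v \<and> y \<noteq> v}
      \<union> {{Inr False, Inr True}}
      \<union> {{Inl u, Inr False} | u. u \<in> A}
      \<union> {{Inl u, Inr True} | u. u \<in> nbrs G v - A})"

definition valid_split :: "'a sgraph \<Rightarrow> 'a \<Rightarrow> 'a set \<Rightarrow> bool" where
  "valid_split G v A \<longleftrightarrow> v \<in> verts G \<and> A \<subseteq> nbrs G v \<and>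
     card A \<ge> 2 \<and> card (nbrs G v - A) \<ge> 2"

datatype evert = e0 | e1 nat | e2 | e3 nat | e4

definition E20 :: "evert sgraph" where
  "E20 = ({e0, e2, e4} \<union> e1 ` {1, 2, 3} \<union> e3 ` {1, 2, 3},
     {{e0, e2}} \<union> {{e0, e1 i} | i. i \<in> {1, 2, 3}}
     \<union> {{e1 1, e1 2}, {e1 2, e1 3}, {e1 3, e1 1}}
     \<union> {{e1 i, e3 i} | i. i \<in> {1, 2, 3}}
     \<union> {{e2, e3 i} | i. i \<in> {1, 2, 3}}
     \<union> {{e4, e3 i} | i. i \<in> {1, 2, 3}})"

text \<open>The graph F_4: f i is f^i, fj i j is f^i_j.\<close>
datatype fvert = f nat | fj nat nat

definition F4 :: "fvert sgraph" where
  "F4 = (f ` {1, 2} \<union> {fj i j | i j. i \<in> {1, 2} \<and> j \<in> {1, 2, 3, 4}},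
     {{f i, fj i 1} | i. i \<in> {1, 2}} \<union> {{f i, fj i 2} | i. i \<in> {1, 2}}
     \<union> {{f i, fj i 4} | i. i \<in> {1, 2}} \<union> {{fj i 3, fj i 1} | i. i \<in> {1, 2}}
     \<union> {{fj i 3, fj i 2} | i. i \<in> {1, 2}} \<union> {{fj i 3, fj i 4} | i. i \<in> {1, 2}}
     \<union> {{fj 1 j, fj 2 (5 - j)} | j. j \<in> {1, 2, 3, 4}})"

definition K34 :: "(nat + nat) sgraph" where
  "K34 = (Inl ` {0..<3} \<union> Inr ` {0..<4},
     {{Inl i, Inr j} | i j. i < 3 \<and> j < 4})"

end

theory Submission
  imports Defs
begin

lemma minor_by_lists:
  fixes M :: "'b sgraph" and G :: "'a sgraph" and \<phi> :: "'b \<Rightarrow> 'a set"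
  assumes V: "verts M \<subseteq> set VM" and E: "\<And>x y. {x,y} \<in> edges M \<Longrightarrow> (x,y) \<in> set EM \<or> (y,x) \<in> set EM"
  and C: "list_all (\<lambda>x. connected_set G (\<phi> x)) VM"
  and D: "list_all (\<lambda>x. list_all (\<lambda>y. x = y \<or> \<phi> x \<inter> \<phi> y = {}) VM) VM"
  and A: "list_all (\<lambda>(a,b). \<exists>u\<in>\<phi> a. \<exists>w\<in>\<phi> b. {u,w} \<in> edges G) EM"
  shows "is_minor M G"
  unfolding is_minor_def
proof (rule exI[of _ \<phi>], intro conjI ballI impI)
  fix x assume "x \<in> verts M" then show "connected_set G (\<phi> x)"
    using C V by (auto simp add: list_all_iff)
next
  fix x y assume "x \<in> verts M" "y \<in> verts M" "x \<noteq> y" then show "\<phi> x \<inter> \<phi> y = {}"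
    using D V by (auto simp add: list_all_iff)
next
  fix x y assume "x \<in> verts M" "y \<in> verts M" "{x, y} \<in> edges M"
  then have "(x,y) \<in> set EM \<or> (y,x) \<in> set EM" using E by blast
  then show "\<exists>u\<in>\<phi> x. \<exists>w\<in>\<phi> y. {u, w} \<in> edges G"
  proof
    assume "(x,y) \<in> set EM" then show ?thesis using A by (auto simp: list_all_iff)
  next
    assume "(y,x) \<in> set EM"
    then have "\<exists>u\<in>\<phi> y. \<exists>w\<in>\<phi> x. {u,w} \<in> edges G" using A by (auto simp: list_all_iff)
    then show ?thesis by (metis insert_commute)
  qed
qed

lemma conn_single: "connected_set G {x} \<longleftrightarrow> x \<in> verts G"
  unfolding connected_set_def by auto

lemma conn_pair: "{x,y} \<in> edges G \<Longrightarrow> x \<in> verts G \<Longrightarrow> y \<in> verts G \<Longrightarrow> connected_set G {x,y}"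
  unfolding connected_set_def
proof (intro conjI ballI)
  assume e: "{x,y} \<in> edges G"
  let ?R = "{(a, b). a \<in> {x,y} \<and> b \<in> {x,y} \<and> {a, b} \<in> edges G}"
  have xy: "(x,y) \<in> ?R" and yx: "(y,x) \<in> ?R" using e by (auto simp: insert_commute)
  fix u v assume "u \<in> {x,y}" "v \<in> {x,y}"
  then show "(u,v) \<in> ?R\<^sup>*" using xy yx by auto
qed auto

lemma sv_verts_Inl: "Inl x \<in> verts (split_vertex G v A) \<longleftrightarrow> x \<in> verts G \<and> x \<noteq> v"
  by (auto simp: split_vertex_def verts_def)
lemma sv_verts_Inr: "Inr b \<in> verts (split_vertex G v A)"
  by (cases b) (auto simp: split_vertex_def verts_def)
lemma sv_LL: "{Inl x, Inl y} \<in> edges (split_vertex G v A) \<longleftrightarrow> {x,y} \<in> edges G \<and> x \<noteq> v \<and> y \<noteq> v"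
  by (auto simp: split_vertex_def edges_def doubleton_eq_iff insert_commute)
lemma sv_LF: "{Inl x, Inr False} \<in> edges (split_vertex G v A) \<longleftrightarrow> x \<in> A"
  by (auto simp: split_vertex_def edges_def doubleton_eq_iff)
lemma sv_FL: "{Inr False, Inl x} \<in> edges (split_vertex G v A) \<longleftrightarrow> x \<in> A"
  by (auto simp: split_vertex_def edges_def doubleton_eq_iff)
lemma sv_LT: "{Inl x, Inr True} \<in> edges (split_vertex G v A) \<longleftrightarrow> x \<in> nbrs G v \<and> x \<notin> A"
  by (auto simp: split_vertex_def edges_def doubleton_eq_iff)
lemma sv_TL: "{Inr True, Inl x} \<in> edges (split_vertex G v A) \<longleftrightarrow> x \<in> nbrs G v \<and> x \<notin> A"
  by (auto simp: split_vertex_def edges_def doubleton_eq_iff)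
lemma sv_FT: "{Inr False, Inr True} \<in> edges (split_vertex G v A)"
  by (auto simp: split_vertex_def edges_def)
lemma sv_TF: "{Inr True, Inr False} \<in> edges (split_vertex G v A)"
  by (auto simp: split_vertex_def edges_def insert_commute)

lemmas sv_simps = sv_verts_Inl sv_verts_Inr sv_LL sv_LF sv_FL sv_LT sv_TL sv_FT sv_TF conn_single conn_pair

definition F4L :: "(fvert \<times> fvert) list" where "F4L = [(f 1, fj 1 1), (f 2, fj 2 1), (f 1, fj 1 2), (f 2, fj 2 2),
   (f 1, fj 1 4), (f 2, fj 2 4), (fj 1 3, fj 1 1), (fj 2 3, fj 2 1), (fj 1 3, fj 1 2), (fj 2 3, fj 2 2),
   (fj 1 3, fj 1 4), (fj 2 3, fj 2 4), (fj 1 1, fj 2 4), (fj 1 2, fj 2 3), (fj 1 3, fj 2 2), (fj 1 4, fj 2 1)]"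

definition K34L :: "((nat + nat) \<times> (nat + nat)) list" where "K34L = [(Inl 0, Inr 0), (Inl 0, Inr 1), (Inl 0, Inr 2), (Inl 0, Inr 3),
  (Inl 1, Inr 0), (Inl 1, Inr 1), (Inl 1, Inr 2), (Inl 1, Inr 3),
  (Inl 2, Inr 0), (Inl 2, Inr 1), (Inl 2, Inr 2), (Inl 2, Inr 3)]"

lemma E20_verts: "verts E20 = {e0, e2, e4, e1 1, e1 2, e1 3, e3 1, e3 2, e3 3}"
  by (auto simp: E20_def verts_def)

lemma E20_edges: "edges E20 = {{e0,e2}, {e0, e1 1}, {e0, e1 2}, {e0, e1 3},
   {e1 1, e1 2}, {e1 2, e1 3}, {e1 3, e1 1},
   {e1 1, e3 1}, {e1 2, e3 2}, {e1 3, e3 3},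
   {e2, e3 1}, {e2, e3 2}, {e2, e3 3}, {e4, e3 1}, {e4, e3 2}, {e4, e3 3}}"
  by (simp only: E20_def edges_def snd_conv Setcompr_eq_image image_insert image_empty Un_insert_left Un_empty_left insert_commute)

lemma F4_verts: "verts F4 \<subseteq> set [f 1, f 2, fj 1 1, fj 1 2, fj 1 3, fj 1 4, fj 2 1, fj 2 2, fj 2 3, fj 2 4]"
  by (auto simp: F4_def verts_def)

lemma F4_edges: assumes "{x,y} \<in> edges F4"
  shows "(x,y) \<in> set F4L \<or> (y,x) \<in> set F4L"
  using assms unfolding F4_def edges_def snd_conv F4L_def
  by (elim UnE CollectE exE conjE; simp add: doubleton_eq_iff; (elim disjE conjE)?; simp)

lemma K34_verts: "verts K34 \<subseteq> set [Inl 0, Inl 1, Inl 2, Inr 0, Inr 1, Inr 2, Inr 3]"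
  by (auto simp: K34_def verts_def)

lemma K34_edges: assumes "{x,y} \<in> edges K34" shows "(x,y) \<in> set K34L \<or> (y,x) \<in> set K34L"
proof -
  obtain i j where e: "{x,y} = {Inl i, Inr j}" "i<3" "j<4" using assms by (auto simp: K34_def edges_def)
  have "i=0 \<or> i=1 \<or> i=2" "j=0\<or>j=1\<or>j=2\<or>j=3" using e by auto
  moreover have "(x = Inl i \<and> y = Inr j) \<or> (x = Inr j \<and> y = Inl i)" using e(1) by (simp add: doubleton_eq_iff)
  ultimately show ?thesis unfolding K34L_def by (elim disjE conjE; simp)
qed

lemma two_subsets:
  assumes "A \<subseteq> {a,b,c,d}" "distinct [a,b,c,d]" "2 \<le> card A" "2 \<le> card ({a,b,c,d} - A)"
  shows "A = {a,b} \<or> A = {a,c} \<or> A = {a,d} \<or> A = {b,c} \<or> A = {b,d} \<or> A = {c,d}"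
proof -
  have fin: "finite A" using assms(1) finite_subset by blast
  have "card ({a,b,c,d} - A) = card {a,b,c,d} - card A" using assms(1) fin by (simp add: card_Diff_subset)
  moreover have "card {a,b,c,d} = 4" using assms(2) by simp
  ultimately have "card A = 2" using assms(3,4) by linarith
  then obtain x y where xy: "A = {x,y}" "x \<noteq> y" by (auto simp: card_2_iff)
  then have "x \<in> {a,b,c,d}" "y \<in> {a,b,c,d}" using assms(1) by auto
  then show ?thesis using xy by (auto simp: insert_commute)
qed


lemma nbrs_e0: "nbrs E20 e0 = {(e1 1), (e1 2), (e1 3), e2}" by (auto simp: nbrs_def E20_verts E20_edges doubleton_eq_iff)

lemma nbrs_e1_1: "nbrs E20 (e1 1) = {e0, (e1 2), (e1 3), (e3 1)}" by (auto simp: nbrs_def E20_verts E20_edges doubleton_eq_iff)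

lemma nbrs_e1_2: "nbrs E20 (e1 2) = {e0, (e1 1), (e1 3), (e3 2)}" by (auto simp: nbrs_def E20_verts E20_edges doubleton_eq_iff)

lemma nbrs_e1_3: "nbrs E20 (e1 3) = {e0, (e1 1), (e1 2), (e3 3)}" by (auto simp: nbrs_def E20_verts E20_edges doubleton_eq_iff)

lemma nbrs_e2: "nbrs E20 e2 = {e0, (e3 1), (e3 2), (e3 3)}" by (auto simp: nbrs_def E20_verts E20_edges doubleton_eq_iff)

lemma nbrs_e4: "nbrs E20 e4 = {(e3 1), (e3 2), (e3 3)}" by (auto simp: nbrs_def E20_verts E20_edges doubleton_eq_iff)

lemma nbrs_e3_1: "nbrs E20 (e3 1) = {(e1 1), e2, e4}" by (auto simp: nbrs_def E20_verts E20_edges doubleton_eq_iff)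

lemma nbrs_e3_2: "nbrs E20 (e3 2) = {(e1 2), e2, e4}" by (auto simp: nbrs_def E20_verts E20_edges doubleton_eq_iff)

lemma nbrs_e3_3: "nbrs E20 (e3 3) = {(e1 3), e2, e4}" by (auto simp: nbrs_def E20_verts E20_edges doubleton_eq_iff)

lemma deg3: "nbrs E20 v = {a,b,c} \<Longrightarrow> \<not> valid_split E20 v A"
proof
  assume N: "nbrs E20 v = {a,b,c}" and V: "valid_split E20 v A"
  then have sub: "A \<subseteq> {a,b,c}" and c1: "2 \<le> card A" and c2: "2 \<le> card ({a,b,c} - A)"
    unfolding valid_split_def by auto
  have fin: "finite A" using sub finite_subset by blast
  have "card ({a,b,c} - A) = card {a,b,c} - card A" using sub fin by (simp add: card_Diff_subset)
  moreover have "card {a,b,c} \<le> 3" by (simp add: card_insert_le_m1)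
  ultimately show False using c1 c2 by linarith
qed

lemma case1: "is_minor F4 (split_vertex E20 e0 {(e1 1), (e1 2)})"
  apply (rule minor_by_lists[OF F4_verts F4_edges, where \<phi> = "\<lambda>x. case map_of [(f 1, {Inl e4}), (f 2, {Inr False}), (fj 1 1, {Inl (e3 1)}), (fj 1 2, {Inl (e3 3)}), (fj 1 3, {Inl e2}), (fj 1 4, {Inl (e3 2)}), (fj 2 1, {Inl (e1 2)}), (fj 2 2, {Inr True}), (fj 2 3, {Inl (e1 3)}), (fj 2 4, {Inl (e1 1)})] x of Some S \<Rightarrow> S | None \<Rightarrow> {}"])
  apply (simp_all add: sv_simps E20_verts E20_edges nbrs_def doubleton_eq_iff F4L_def K34L_def)
  done

lemma case2: "is_minor F4 (split_vertex E20 e0 {(e1 1), (e1 3)})"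
  apply (rule minor_by_lists[OF F4_verts F4_edges, where \<phi> = "\<lambda>x. case map_of [(f 1, {Inl e4}), (f 2, {Inr False}), (fj 1 1, {Inl (e3 1)}), (fj 1 2, {Inl (e3 2)}), (fj 1 3, {Inl e2}), (fj 1 4, {Inl (e3 3)}), (fj 2 1, {Inl (e1 3)}), (fj 2 2, {Inr True}), (fj 2 3, {Inl (e1 2)}), (fj 2 4, {Inl (e1 1)})] x of Some S \<Rightarrow> S | None \<Rightarrow> {}"])
  apply (simp_all add: sv_simps E20_verts E20_edges nbrs_def doubleton_eq_iff F4L_def K34L_def)
  done

lemma case3: "is_minor F4 (split_vertex E20 e0 {(e1 1), e2})"
  apply (rule minor_by_lists[OF F4_verts F4_edges, where \<phi> = "\<lambda>x. case map_of [(f 1, {Inl e4}), (f 2, {Inr True}), (fj 1 1, {Inl (e3 2)}), (fj 1 2, {Inl (e3 1)}), (fj 1 3, {Inl e2}), (fj 1 4, {Inl (e3 3)}), (fj 2 1, {Inl (e1 3)}), (fj 2 2, {Inr False}), (fj 2 3, {Inl (e1 1)}), (fj 2 4, {Inl (e1 2)})] x of Some S \<Rightarrow> S | None \<Rightarrow> {}"])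
  apply (simp_all add: sv_simps E20_verts E20_edges nbrs_def doubleton_eq_iff F4L_def K34L_def)
  done

lemma case4: "is_minor F4 (split_vertex E20 e0 {(e1 2), (e1 3)})"
  apply (rule minor_by_lists[OF F4_verts F4_edges, where \<phi> = "\<lambda>x. case map_of [(f 1, {Inl e4}), (f 2, {Inr False}), (fj 1 1, {Inl (e3 2)}), (fj 1 2, {Inl (e3 1)}), (fj 1 3, {Inl e2}), (fj 1 4, {Inl (e3 3)}), (fj 2 1, {Inl (e1 3)}), (fj 2 2, {Inr True}), (fj 2 3, {Inl (e1 1)}), (fj 2 4, {Inl (e1 2)})] x of Some S \<Rightarrow> S | None \<Rightarrow> {}"])
  apply (simp_all add: sv_simps E20_verts E20_edges nbrs_def doubleton_eq_iff F4L_def K34L_def)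
  done

lemma case5: "is_minor F4 (split_vertex E20 e0 {(e1 2), e2})"
  apply (rule minor_by_lists[OF F4_verts F4_edges, where \<phi> = "\<lambda>x. case map_of [(f 1, {Inl e4}), (f 2, {Inr True}), (fj 1 1, {Inl (e3 1)}), (fj 1 2, {Inl (e3 2)}), (fj 1 3, {Inl e2}), (fj 1 4, {Inl (e3 3)}), (fj 2 1, {Inl (e1 3)}), (fj 2 2, {Inr False}), (fj 2 3, {Inl (e1 2)}), (fj 2 4, {Inl (e1 1)})] x of Some S \<Rightarrow> S | None \<Rightarrow> {}"])
  apply (simp_all add: sv_simps E20_verts E20_edges nbrs_def doubleton_eq_iff F4L_def K34L_def)
  done

lemma case6: "is_minor F4 (split_vertex E20 e0 {(e1 3), e2})"
  apply (rule minor_by_lists[OF F4_verts F4_edges, where \<phi> = "\<lambda>x. case map_of [(f 1, {Inl e4}), (f 2, {Inr True}), (fj 1 1, {Inl (e3 1)}), (fj 1 2, {Inl (e3 3)}), (fj 1 3, {Inl e2}), (fj 1 4, {Inl (e3 2)}), (fj 2 1, {Inl (e1 2)}), (fj 2 2, {Inr False}), (fj 2 3, {Inl (e1 3)}), (fj 2 4, {Inl (e1 1)})] x of Some S \<Rightarrow> S | None \<Rightarrow> {}"])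
  apply (simp_all add: sv_simps E20_verts E20_edges nbrs_def doubleton_eq_iff F4L_def K34L_def)
  done

lemma case7: "is_minor F4 (split_vertex E20 (e1 1) {e0, (e1 2)})"
  apply (rule minor_by_lists[OF F4_verts F4_edges, where \<phi> = "\<lambda>x. case map_of [(f 1, {Inl e4}), (f 2, {Inr False}), (fj 1 1, {Inl (e3 1)}), (fj 1 2, {Inl (e3 3)}), (fj 1 3, {Inl e2}), (fj 1 4, {Inl (e3 2)}), (fj 2 1, {Inl (e1 2)}), (fj 2 2, {Inl e0}), (fj 2 3, {Inl (e1 3)}), (fj 2 4, {Inr True})] x of Some S \<Rightarrow> S | None \<Rightarrow> {}"])
  apply (simp_all add: sv_simps E20_verts E20_edges nbrs_def doubleton_eq_iff F4L_def K34L_def)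
  done

lemma case8: "is_minor F4 (split_vertex E20 (e1 1) {e0, (e1 3)})"
  apply (rule minor_by_lists[OF F4_verts F4_edges, where \<phi> = "\<lambda>x. case map_of [(f 1, {Inl e4}), (f 2, {Inr False}), (fj 1 1, {Inl (e3 1)}), (fj 1 2, {Inl (e3 2)}), (fj 1 3, {Inl e2}), (fj 1 4, {Inl (e3 3)}), (fj 2 1, {Inl (e1 3)}), (fj 2 2, {Inl e0}), (fj 2 3, {Inl (e1 2)}), (fj 2 4, {Inr True})] x of Some S \<Rightarrow> S | None \<Rightarrow> {}"])
  apply (simp_all add: sv_simps E20_verts E20_edges nbrs_def doubleton_eq_iff F4L_def K34L_def)
  done

lemma case9: "is_minor K34 (split_vertex E20 (e1 1) {e0, (e3 1)})"
  apply (rule minor_by_lists[OF K34_verts K34_edges, where \<phi> = "\<lambda>x. case map_of [(Inl 0, {Inl (e1 2), Inl (e3 2)}), (Inl 1, {Inl (e1 3), Inl (e3 3)}), (Inl 2, {Inl (e3 1), Inr False}), (Inr 0, {Inl e0}), (Inr 1, {Inl e2}), (Inr 2, {Inl e4}), (Inr 3, {Inr True})] x of Some S \<Rightarrow> S | None \<Rightarrow> {}"])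
  apply (simp_all add: sv_simps E20_verts E20_edges nbrs_def doubleton_eq_iff F4L_def K34L_def)
  done

lemma case10: "is_minor K34 (split_vertex E20 (e1 1) {(e1 2), (e1 3)})"
  apply (rule minor_by_lists[OF K34_verts K34_edges, where \<phi> = "\<lambda>x. case map_of [(Inl 0, {Inl (e1 2), Inl (e3 2)}), (Inl 1, {Inl (e1 3), Inl (e3 3)}), (Inl 2, {Inl (e3 1), Inr True}), (Inr 0, {Inl e0}), (Inr 1, {Inl e2}), (Inr 2, {Inl e4}), (Inr 3, {Inr False})] x of Some S \<Rightarrow> S | None \<Rightarrow> {}"])
  apply (simp_all add: sv_simps E20_verts E20_edges nbrs_def doubleton_eq_iff F4L_def K34L_def)
  done

lemma case11: "is_minor F4 (split_vertex E20 (e1 1) {(e1 2), (e3 1)})"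
  apply (rule minor_by_lists[OF F4_verts F4_edges, where \<phi> = "\<lambda>x. case map_of [(f 1, {Inl e4}), (f 2, {Inr True}), (fj 1 1, {Inl (e3 1)}), (fj 1 2, {Inl (e3 2)}), (fj 1 3, {Inl e2}), (fj 1 4, {Inl (e3 3)}), (fj 2 1, {Inl (e1 3)}), (fj 2 2, {Inl e0}), (fj 2 3, {Inl (e1 2)}), (fj 2 4, {Inr False})] x of Some S \<Rightarrow> S | None \<Rightarrow> {}"])
  apply (simp_all add: sv_simps E20_verts E20_edges nbrs_def doubleton_eq_iff F4L_def K34L_def)
  done

lemma case12: "is_minor F4 (split_vertex E20 (e1 1) {(e1 3), (e3 1)})"
  apply (rule minor_by_lists[OF F4_verts F4_edges, where \<phi> = "\<lambda>x. case map_of [(f 1, {Inl e4}), (f 2, {Inr True}), (fj 1 1, {Inl (e3 1)}), (fj 1 2, {Inl (e3 3)}), (fj 1 3, {Inl e2}), (fj 1 4, {Inl (e3 2)}), (fj 2 1, {Inl (e1 2)}), (fj 2 2, {Inl e0}), (fj 2 3, {Inl (e1 3)}), (fj 2 4, {Inr False})] x of Some S \<Rightarrow> S | None \<Rightarrow> {}"])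
  apply (simp_all add: sv_simps E20_verts E20_edges nbrs_def doubleton_eq_iff F4L_def K34L_def)
  done

lemma case13: "is_minor F4 (split_vertex E20 (e1 2) {e0, (e1 1)})"
  apply (rule minor_by_lists[OF F4_verts F4_edges, where \<phi> = "\<lambda>x. case map_of [(f 1, {Inl e4}), (f 2, {Inr False}), (fj 1 1, {Inl (e3 1)}), (fj 1 2, {Inl (e3 3)}), (fj 1 3, {Inl e2}), (fj 1 4, {Inl (e3 2)}), (fj 2 1, {Inr True}), (fj 2 2, {Inl e0}), (fj 2 3, {Inl (e1 3)}), (fj 2 4, {Inl (e1 1)})] x of Some S \<Rightarrow> S | None \<Rightarrow> {}"])
  apply (simp_all add: sv_simps E20_verts E20_edges nbrs_def doubleton_eq_iff F4L_def K34L_def)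
  done

lemma case14: "is_minor F4 (split_vertex E20 (e1 2) {e0, (e1 3)})"
  apply (rule minor_by_lists[OF F4_verts F4_edges, where \<phi> = "\<lambda>x. case map_of [(f 1, {Inl e4}), (f 2, {Inr False}), (fj 1 1, {Inl (e3 2)}), (fj 1 2, {Inl (e3 1)}), (fj 1 3, {Inl e2}), (fj 1 4, {Inl (e3 3)}), (fj 2 1, {Inl (e1 3)}), (fj 2 2, {Inl e0}), (fj 2 3, {Inl (e1 1)}), (fj 2 4, {Inr True})] x of Some S \<Rightarrow> S | None \<Rightarrow> {}"])
  apply (simp_all add: sv_simps E20_verts E20_edges nbrs_def doubleton_eq_iff F4L_def K34L_def)
  done

lemma case15: "is_minor K34 (split_vertex E20 (e1 2) {e0, (e3 2)})"
  apply (rule minor_by_lists[OF K34_verts K34_edges, where \<phi> = "\<lambda>x. case map_of [(Inl 0, {Inl (e1 1), Inl (e3 1)}), (Inl 1, {Inl (e1 3), Inl (e3 3)}), (Inl 2, {Inl (e3 2), Inr False}), (Inr 0, {Inl e0}), (Inr 1, {Inl e2}), (Inr 2, {Inl e4}), (Inr 3, {Inr True})] x of Some S \<Rightarrow> S | None \<Rightarrow> {}"])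
  apply (simp_all add: sv_simps E20_verts E20_edges nbrs_def doubleton_eq_iff F4L_def K34L_def)
  done

lemma case16: "is_minor K34 (split_vertex E20 (e1 2) {(e1 1), (e1 3)})"
  apply (rule minor_by_lists[OF K34_verts K34_edges, where \<phi> = "\<lambda>x. case map_of [(Inl 0, {Inl (e1 1), Inl (e3 1)}), (Inl 1, {Inl (e1 3), Inl (e3 3)}), (Inl 2, {Inl (e3 2), Inr True}), (Inr 0, {Inl e0}), (Inr 1, {Inl e2}), (Inr 2, {Inl e4}), (Inr 3, {Inr False})] x of Some S \<Rightarrow> S | None \<Rightarrow> {}"])
  apply (simp_all add: sv_simps E20_verts E20_edges nbrs_def doubleton_eq_iff F4L_def K34L_def)
  done

lemma case17: "is_minor F4 (split_vertex E20 (e1 2) {(e1 1), (e3 2)})"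
  apply (rule minor_by_lists[OF F4_verts F4_edges, where \<phi> = "\<lambda>x. case map_of [(f 1, {Inl e4}), (f 2, {Inr True}), (fj 1 1, {Inl (e3 2)}), (fj 1 2, {Inl (e3 1)}), (fj 1 3, {Inl e2}), (fj 1 4, {Inl (e3 3)}), (fj 2 1, {Inl (e1 3)}), (fj 2 2, {Inl e0}), (fj 2 3, {Inl (e1 1)}), (fj 2 4, {Inr False})] x of Some S \<Rightarrow> S | None \<Rightarrow> {}"])
  apply (simp_all add: sv_simps E20_verts E20_edges nbrs_def doubleton_eq_iff F4L_def K34L_def)
  done

lemma case18: "is_minor F4 (split_vertex E20 (e1 2) {(e1 3), (e3 2)})"
  apply (rule minor_by_lists[OF F4_verts F4_edges, where \<phi> = "\<lambda>x. case map_of [(f 1, {Inl e4}), (f 2, {Inr True}), (fj 1 1, {Inl (e3 1)}), (fj 1 2, {Inl (e3 3)}), (fj 1 3, {Inl e2}), (fj 1 4, {Inl (e3 2)}), (fj 2 1, {Inr False}), (fj 2 2, {Inl e0}), (fj 2 3, {Inl (e1 3)}), (fj 2 4, {Inl (e1 1)})] x of Some S \<Rightarrow> S | None \<Rightarrow> {}"])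
  apply (simp_all add: sv_simps E20_verts E20_edges nbrs_def doubleton_eq_iff F4L_def K34L_def)
  done

lemma case19: "is_minor F4 (split_vertex E20 (e1 3) {e0, (e1 1)})"
  apply (rule minor_by_lists[OF F4_verts F4_edges, where \<phi> = "\<lambda>x. case map_of [(f 1, {Inl e4}), (f 2, {Inr False}), (fj 1 1, {Inl (e3 1)}), (fj 1 2, {Inl (e3 2)}), (fj 1 3, {Inl e2}), (fj 1 4, {Inl (e3 3)}), (fj 2 1, {Inr True}), (fj 2 2, {Inl e0}), (fj 2 3, {Inl (e1 2)}), (fj 2 4, {Inl (e1 1)})] x of Some S \<Rightarrow> S | None \<Rightarrow> {}"])
  apply (simp_all add: sv_simps E20_verts E20_edges nbrs_def doubleton_eq_iff F4L_def K34L_def)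
  done

lemma case20: "is_minor F4 (split_vertex E20 (e1 3) {e0, (e1 2)})"
  apply (rule minor_by_lists[OF F4_verts F4_edges, where \<phi> = "\<lambda>x. case map_of [(f 1, {Inl e4}), (f 2, {Inr False}), (fj 1 1, {Inl (e3 2)}), (fj 1 2, {Inl (e3 1)}), (fj 1 3, {Inl e2}), (fj 1 4, {Inl (e3 3)}), (fj 2 1, {Inr True}), (fj 2 2, {Inl e0}), (fj 2 3, {Inl (e1 1)}), (fj 2 4, {Inl (e1 2)})] x of Some S \<Rightarrow> S | None \<Rightarrow> {}"])
  apply (simp_all add: sv_simps E20_verts E20_edges nbrs_def doubleton_eq_iff F4L_def K34L_def)
  done

lemma case21: "is_minor K34 (split_vertex E20 (e1 3) {e0, (e3 3)})"
  apply (rule minor_by_lists[OF K34_verts K34_edges, where \<phi> = "\<lambda>x. case map_of [(Inl 0, {Inl (e1 1), Inl (e3 1)}), (Inl 1, {Inl (e1 2), Inl (e3 2)}), (Inl 2, {Inl (e3 3), Inr False}), (Inr 0, {Inl e0}), (Inr 1, {Inl e2}), (Inr 2, {Inl e4}), (Inr 3, {Inr True})] x of Some S \<Rightarrow> S | None \<Rightarrow> {}"])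
  apply (simp_all add: sv_simps E20_verts E20_edges nbrs_def doubleton_eq_iff F4L_def K34L_def)
  done

lemma case22: "is_minor K34 (split_vertex E20 (e1 3) {(e1 1), (e1 2)})"
  apply (rule minor_by_lists[OF K34_verts K34_edges, where \<phi> = "\<lambda>x. case map_of [(Inl 0, {Inl (e1 1), Inl (e3 1)}), (Inl 1, {Inl (e1 2), Inl (e3 2)}), (Inl 2, {Inl (e3 3), Inr True}), (Inr 0, {Inl e0}), (Inr 1, {Inl e2}), (Inr 2, {Inl e4}), (Inr 3, {Inr False})] x of Some S \<Rightarrow> S | None \<Rightarrow> {}"])
  apply (simp_all add: sv_simps E20_verts E20_edges nbrs_def doubleton_eq_iff F4L_def K34L_def)
  done

lemma case23: "is_minor F4 (split_vertex E20 (e1 3) {(e1 1), (e3 3)})"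
  apply (rule minor_by_lists[OF F4_verts F4_edges, where \<phi> = "\<lambda>x. case map_of [(f 1, {Inl e4}), (f 2, {Inr True}), (fj 1 1, {Inl (e3 2)}), (fj 1 2, {Inl (e3 1)}), (fj 1 3, {Inl e2}), (fj 1 4, {Inl (e3 3)}), (fj 2 1, {Inr False}), (fj 2 2, {Inl e0}), (fj 2 3, {Inl (e1 1)}), (fj 2 4, {Inl (e1 2)})] x of Some S \<Rightarrow> S | None \<Rightarrow> {}"])
  apply (simp_all add: sv_simps E20_verts E20_edges nbrs_def doubleton_eq_iff F4L_def K34L_def)
  done

lemma case24: "is_minor F4 (split_vertex E20 (e1 3) {(e1 2), (e3 3)})"
  apply (rule minor_by_lists[OF F4_verts F4_edges, where \<phi> = "\<lambda>x. case map_of [(f 1, {Inl e4}), (f 2, {Inr True}), (fj 1 1, {Inl (e3 1)}), (fj 1 2, {Inl (e3 2)}), (fj 1 3, {Inl e2}), (fj 1 4, {Inl (e3 3)}), (fj 2 1, {Inr False}), (fj 2 2, {Inl e0}), (fj 2 3, {Inl (e1 2)}), (fj 2 4, {Inl (e1 1)})] x of Some S \<Rightarrow> S | None \<Rightarrow> {}"])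
  apply (simp_all add: sv_simps E20_verts E20_edges nbrs_def doubleton_eq_iff F4L_def K34L_def)
  done

lemma case25: "is_minor K34 (split_vertex E20 e2 {e0, (e3 1)})"
  apply (rule minor_by_lists[OF K34_verts K34_edges, where \<phi> = "\<lambda>x. case map_of [(Inl 0, {Inl (e1 2), Inl (e3 2)}), (Inl 1, {Inl (e1 3), Inl (e3 3)}), (Inl 2, {Inl (e3 1), Inr False}), (Inr 0, {Inl e0}), (Inr 1, {Inl e4}), (Inr 2, {Inl (e1 1)}), (Inr 3, {Inr True})] x of Some S \<Rightarrow> S | None \<Rightarrow> {}"])
  apply (simp_all add: sv_simps E20_verts E20_edges nbrs_def doubleton_eq_iff F4L_def K34L_def)
  done

lemma case26: "is_minor K34 (split_vertex E20 e2 {e0, (e3 2)})"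
  apply (rule minor_by_lists[OF K34_verts K34_edges, where \<phi> = "\<lambda>x. case map_of [(Inl 0, {Inl (e1 1), Inl (e3 1)}), (Inl 1, {Inl (e1 3), Inl (e3 3)}), (Inl 2, {Inl (e3 2), Inr False}), (Inr 0, {Inl e0}), (Inr 1, {Inl e4}), (Inr 2, {Inl (e1 2)}), (Inr 3, {Inr True})] x of Some S \<Rightarrow> S | None \<Rightarrow> {}"])
  apply (simp_all add: sv_simps E20_verts E20_edges nbrs_def doubleton_eq_iff F4L_def K34L_def)
  done

lemma case27: "is_minor K34 (split_vertex E20 e2 {e0, (e3 3)})"
  apply (rule minor_by_lists[OF K34_verts K34_edges, where \<phi> = "\<lambda>x. case map_of [(Inl 0, {Inl (e1 1), Inl (e3 1)}), (Inl 1, {Inl (e1 2), Inl (e3 2)}), (Inl 2, {Inl (e3 3), Inr False}), (Inr 0, {Inl e0}), (Inr 1, {Inl e4}), (Inr 2, {Inl (e1 3)}), (Inr 3, {Inr True})] x of Some S \<Rightarrow> S | None \<Rightarrow> {}"])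
  apply (simp_all add: sv_simps E20_verts E20_edges nbrs_def doubleton_eq_iff F4L_def K34L_def)
  done

lemma case28: "is_minor K34 (split_vertex E20 e2 {(e3 1), (e3 2)})"
  apply (rule minor_by_lists[OF K34_verts K34_edges, where \<phi> = "\<lambda>x. case map_of [(Inl 0, {Inl (e1 1), Inl (e3 1)}), (Inl 1, {Inl (e1 2), Inl (e3 2)}), (Inl 2, {Inl (e3 3), Inr True}), (Inr 0, {Inl e0}), (Inr 1, {Inl e4}), (Inr 2, {Inl (e1 3)}), (Inr 3, {Inr False})] x of Some S \<Rightarrow> S | None \<Rightarrow> {}"])
  apply (simp_all add: sv_simps E20_verts E20_edges nbrs_def doubleton_eq_iff F4L_def K34L_def)
  done

lemma case29: "is_minor K34 (split_vertex E20 e2 {(e3 1), (e3 3)})"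
  apply (rule minor_by_lists[OF K34_verts K34_edges, where \<phi> = "\<lambda>x. case map_of [(Inl 0, {Inl (e1 1), Inl (e3 1)}), (Inl 1, {Inl (e1 3), Inl (e3 3)}), (Inl 2, {Inl (e3 2), Inr True}), (Inr 0, {Inl e0}), (Inr 1, {Inl e4}), (Inr 2, {Inl (e1 2)}), (Inr 3, {Inr False})] x of Some S \<Rightarrow> S | None \<Rightarrow> {}"])
  apply (simp_all add: sv_simps E20_verts E20_edges nbrs_def doubleton_eq_iff F4L_def K34L_def)
  done

lemma case30: "is_minor K34 (split_vertex E20 e2 {(e3 2), (e3 3)})"
  apply (rule minor_by_lists[OF K34_verts K34_edges, where \<phi> = "\<lambda>x. case map_of [(Inl 0, {Inl (e1 2), Inl (e3 2)}), (Inl 1, {Inl (e1 3), Inl (e3 3)}), (Inl 2, {Inl (e3 1), Inr True}), (Inr 0, {Inl e0}), (Inr 1, {Inl e4}), (Inr 2, {Inl (e1 1)}), (Inr 3, {Inr False})] x of Some S \<Rightarrow> S | None \<Rightarrow> {}"])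
  apply (simp_all add: sv_simps E20_verts E20_edges nbrs_def doubleton_eq_iff F4L_def K34L_def)
  done

theorem lemma4p2:
  fixes v :: evert and A :: "evert set"
  assumes "valid_split E20 v A"
  shows "is_minor K34 (split_vertex E20 v A) \<or> is_minor F4 (split_vertex E20 v A)"
proof -
  have "v \<in> verts E20" using assms by (simp add: valid_split_def)
  then have "v = e0 \<or> v = (e1 1) \<or> v = (e1 2) \<or> v = (e1 3) \<or> v = e2 \<or> v = e4 \<or> v = (e3 1) \<or> v = (e3 2) \<or> v = (e3 3)" by (auto simp: E20_verts)
  then show ?thesis
  proof (elim disjE)
    assume vv: "v = e0"
    then have "valid_split E20 e0 A" using assms by simp
    then have "A = {(e1 1), (e1 2)} \<or> A = {(e1 1), (e1 3)} \<or> A = {(e1 1), e2} \<or> A = {(e1 2), (e1 3)} \<or> A = {(e1 2), e2} \<or> A = {(e1 3), e2}"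
      using two_subsets[of A "(e1 1)" "(e1 2)" "(e1 3)" "e2"] unfolding valid_split_def nbrs_e0 by simp
    then show ?thesis using vv by (elim disjE; simp only: case1 case2 case3 case4 case5 case6 simp_thms)
  next
    assume vv: "v = (e1 1)"
    then have "valid_split E20 (e1 1) A" using assms by simp
    then have "A = {e0, (e1 2)} \<or> A = {e0, (e1 3)} \<or> A = {e0, (e3 1)} \<or> A = {(e1 2), (e1 3)} \<or> A = {(e1 2), (e3 1)} \<or> A = {(e1 3), (e3 1)}"
      using two_subsets[of A "e0" "(e1 2)" "(e1 3)" "(e3 1)"] unfolding valid_split_def nbrs_e1_1 by simp
    then show ?thesis using vv by (elim disjE; simp only: case7 case8 case9 case10 case11 case12 simp_thms)
  next
    assume vv: "v = (e1 2)"
    then have "valid_split E20 (e1 2) A" using assms by simp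
    then have "A = {e0, (e1 1)} \<or> A = {e0, (e1 3)} \<or> A = {e0, (e3 2)} \<or> A = {(e1 1), (e1 3)} \<or> A = {(e1 1), (e3 2)} \<or> A = {(e1 3), (e3 2)}"
      using two_subsets[of A "e0" "(e1 1)" "(e1 3)" "(e3 2)"] unfolding valid_split_def nbrs_e1_2 by simp
    then show ?thesis using vv by (elim disjE; simp only: case13 case14 case15 case16 case17 case18 simp_thms)
  next
    assume vv: "v = (e1 3)"
    then have "valid_split E20 (e1 3) A" using assms by simp
    then have "A = {e0, (e1 1)} \<or> A = {e0, (e1 2)} \<or> A = {e0, (e3 3)} \<or> A = {(e1 1), (e1 2)} \<or> A = {(e1 1), (e3 3)} \<or> A = {(e1 2), (e3 3)}"
      using two_subsets[of A "e0" "(e1 1)" "(e1 2)" "(e3 3)"] unfolding valid_split_def nbrs_e1_3 by simp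
    then show ?thesis using vv by (elim disjE; simp only: case19 case20 case21 case22 case23 case24 simp_thms)
  next
    assume vv: "v = e2"
    then have "valid_split E20 e2 A" using assms by simp
    then have "A = {e0, (e3 1)} \<or> A = {e0, (e3 2)} \<or> A = {e0, (e3 3)} \<or> A = {(e3 1), (e3 2)} \<or> A = {(e3 1), (e3 3)} \<or> A = {(e3 2), (e3 3)}"
      using two_subsets[of A "e0" "(e3 1)" "(e3 2)" "(e3 3)"] unfolding valid_split_def nbrs_e2 by simp
    then show ?thesis using vv by (elim disjE; simp only: case25 case26 case27 case28 case29 case30 simp_thms)
  next
    assume "v = e4" then show ?thesis using assms deg3[OF nbrs_e4] by simp
  next
    assume "v = (e3 1)" then show ?thesis using assms deg3[OF nbrs_e3_1] by simp
  next
    assume "v = (e3 2)" then show ?thesis using assms deg3[OF nbrs_e3_2] by simp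
  next
    assume "v = (e3 3)" then show ?thesis using assms deg3[OF nbrs_e3_3] by simp
  qed
qed

end
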